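(* Let $d,N\ge 1$, let $V$ be a real invertible $d\times d$ matrix, let $\Lambda_{ni}\in\mathbb R$ ($n=1,\dots,N$, $i=1,\dots,d$), and set $M_n=V\,{\rm diag}(\Lambda_{n1},\dots,\Lambda_{nd})\,V^{-1}$ for $n=1,\dots,N$; let $\mathcal M_\circ=\{M_n\}_{n=1}^N$. Suppose that for every $i\neq i'$ in $\{1,\dots,d\}$ there exists $n\in\{1,\dots,N\}$ with $\Lambda_{ni}\neq\Lambda_{ni'}$. Then $\mathcal M_\circ$ admits exactly $2^d d!$ exact joint triangularizers.
   Context: All matrices are real. For a $d\times d$ matrix $A$, ${\rm low}(A)$ is its strictly lower-triangular part: $[{\rm low}(A)]_{ij}=A_{ij}$ if $i>j$ and $0$ otherwise. $\mathbb O(d)$ is the set of $d\times d$ orthogonal matrices. An exact joint triangularizer of $\mathcal M_\circ$ is a matrix $U_\circ\in\mathbb O(d)$ with ${\rm low}(U_\circ^TM_nU_\circ)=0$ for all $n=1,\dots,N$. *)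

theory Defs
  imports "Jordan_Normal_Form.Matrix"
begin

definition low :: "real mat \<Rightarrow> real mat" where
  "low A = mat (dim_row A) (dim_col A) (\<lambda>(i,j). if i > j then A $$ (i,j) else 0)"

definition orth_mat :: "nat \<Rightarrow> real mat \<Rightarrow> bool" where
  "orth_mat d U \<longleftrightarrow> U \<in> carrier_mat d d \<and> transpose_mat U * U = 1\<^sub>m d"

definition diag_of :: "nat \<Rightarrow> (nat \<Rightarrow> real) \<Rightarrow> real mat" where
  "diag_of d f = mat d d (\<lambda>(i,j). if i = j then f i else 0)"

definition exact_joint_triangularizer :: "nat \<Rightarrow> nat \<Rightarrow> (nat \<Rightarrow> real mat) \<Rightarrow> real mat \<Rightarrow> bool" where
  "exact_joint_triangularizer d N M U \<longleftrightarrow>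
     orth_mat d U \<and> (\<forall>n<N. low (transpose_mat U * M n * U) = 0\<^sub>m d d)"

end

theory Submission
  imports Defs "Jordan_Normal_Form.Determinant" "HOL-Library.FuncSet"
begin


lemma mult_entry:
  assumes "A \<in> carrier_mat n m" "B \<in> carrier_mat m p" "i < n" "j < p"
  shows "(A*B)$$(i,j) = (\<Sum>k<m. A$$(i,k)*B$$(k,j))"
  using assms by (auto simp: scalar_prod_def lessThan_atLeast0 intro!: sum.cong)

lemma det_ne0_of_inv:
  fixes A B :: "real mat"
  assumes "A \<in> carrier_mat n n" "B \<in> carrier_mat n n" "A * B = 1\<^sub>m n"
  shows "det A \<noteq> 0"
proof -
  have "det A * det B = 1" using det_mult[OF assms(1,2)] assms(3) by simp
  thus ?thesis by auto
qed

lemma ut_diag_ne0: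
  fixes A :: "real mat"
  assumes "A \<in> carrier_mat n n" "upper_triangular A" "det A \<noteq> 0" "i < n"
  shows "A$$(i,i) \<noteq> 0"
proof
  assume z: "A$$(i,i) = 0"
  have "det A = prod_list (diag_mat A)" by (rule det_upper_triangular[OF assms(2,1)])
  also have "0 \<in> set (diag_mat A)" using z assms(1,4) unfolding diag_mat_def by force
  hence "prod_list (diag_mat A) = 0" by (simp add: prod_list_zero_iff)
  finally show False using assms(3) by simp
qed

lemma ut_solve:
  fixes A B C :: "real mat"
  assumes A: "A \<in> carrier_mat n n" and B: "B \<in> carrier_mat n n"
    and uA: "upper_triangular A" and dA: "\<And>i. i < n \<Longrightarrow> A$$(i,i) \<noteq> 0"
    and uC: "upper_triangular C" and AB: "A * B = C"
  shows "upper_triangular B"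
proof -
  have C: "C \<in> carrier_mat n n" using A B AB by auto
  have main: "B$$(i,j) = 0" if "j < i" "i < n" for i j
    using that
  proof (induct "n - i" arbitrary: i rule: less_induct)
    case less
    have "0 = C$$(i,j)" using uC C less by (auto simp: upper_triangular_def)
    also have "\<dots> = (\<Sum>k<n. A$$(i,k)*B$$(k,j))"
      unfolding AB[symmetric] using A B less by (intro mult_entry[of A n n B n]) auto
    also have "\<dots> = (\<Sum>k<n. if k = i then A$$(i,i)*B$$(i,j) else 0)"
    proof (rule sum.cong)
      fix k assume k: "k \<in> {..<n}"
      show "A$$(i,k)*B$$(k,j) = (if k = i then A$$(i,i)*B$$(i,j) else 0)"
      proof (cases "k < i")
        case True thus ?thesis using uA A less by (auto simp: upper_triangular_def)
      next
        case False
        show ?thesis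
        proof (cases "k = i")
          case False
          hence "k > i" using \<open>\<not> k < i\<close> by auto
          hence "B$$(k,j) = 0" using less k by (intro less(1)) auto
          thus ?thesis using False by simp
        qed simp
      qed
    qed simp
    also have "\<dots> = A$$(i,i)*B$$(i,j)" using less by simp
    finally show ?case using dA[OF less(3)] by simp
  qed
  show ?thesis using B main by (auto simp: upper_triangular_def)
qed




definition ON :: "nat \<Rightarrow> nat \<Rightarrow> real mat \<Rightarrow> bool" where
  "ON d k X \<longleftrightarrow> (\<forall>i<k. \<forall>j<k. (\<Sum>r<d. X$$(r,i)*X$$(r,j)) = (if i=j then 1 else 0))"

lemma gs_step:
  fixes A B T :: "real mat"
  assumes A: "A \<in> carrier_mat d d" and B: "B \<in> carrier_mat d d" and BA: "B * A = 1\<^sub>m d"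
    and T: "T \<in> carrier_mat d d" and uT: "upper_triangular T" and k: "k < d"
    and on: "ON d k (A*T)"
  shows "\<exists>T'. T' \<in> carrier_mat d d \<and> upper_triangular T' \<and> ON d (Suc k) (A*T')"
proof -
  define u where "u j r = (A*T)$$(r,j)" for j r
  define \<alpha> where "\<alpha> j = (\<Sum>r<d. A$$(r,k) * u j r)" for j
  define c where "c i = (if i = k then 1 else 0) - (\<Sum>j<k. \<alpha> j * T$$(i,j))" for i
  define v where "v r = (\<Sum>l<d. A$$(r,l) * c l)" for r
  have uexp: "u j r = (\<Sum>l<d. A$$(r,l) * T$$(l,j))" if "j < d" "r < d" for j r
    unfolding u_def using that A T by (intro mult_entry[of A d d T d]) auto
  have on': "(\<Sum>r<d. u i r * u j r) = (if i=j then 1 else 0)" if "i<k" "j<k" for i j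
    using on that unfolding ON_def u_def by auto
  have v1: "v r = A$$(r,k) - (\<Sum>j<k. \<alpha> j * u j r)" if r: "r < d" for r
  proof -
    have "v r = (\<Sum>l<d. A$$(r,l) * (if l = k then 1 else 0)) - (\<Sum>l<d. A$$(r,l) * (\<Sum>j<k. \<alpha> j * T$$(l,j)))"
      unfolding v_def c_def by (simp add: right_diff_distrib sum_subtractf)
    also have "(\<Sum>l<d. A$$(r,l) * (if l = k then 1 else 0)) = A$$(r,k)"
      using k by (simp add: mult.commute[of _ "if _ then _ else _"] if_distrib cong: if_cong)
    also have "(\<Sum>l<d. A$$(r,l) * (\<Sum>j<k. \<alpha> j * T$$(l,j))) = (\<Sum>l<d. \<Sum>j<k. \<alpha> j * (A$$(r,l) * T$$(l,j)))"
      by (simp add: sum_distrib_left algebra_simps)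
    also have "\<dots> = (\<Sum>j<k. \<Sum>l<d. \<alpha> j * (A$$(r,l) * T$$(l,j)))" by (rule sum.swap)
    also have "\<dots> = (\<Sum>j<k. \<alpha> j * (\<Sum>l<d. A$$(r,l) * T$$(l,j)))"
      by (simp add: sum_distrib_left)
    also have "\<dots> = (\<Sum>j<k. \<alpha> j * u j r)"
      using uexp r k by (intro sum.cong) auto
    finally show ?thesis .
  qed
  have v2: "(\<Sum>r<d. v r * u i r) = 0" if i: "i < k" for i
  proof -
    have "(\<Sum>r<d. v r * u i r) = (\<Sum>r<d. A$$(r,k) * u i r) - (\<Sum>r<d. (\<Sum>j<k. \<alpha> j * u j r) * u i r)"
      using v1 by (simp add: left_diff_distrib sum_subtractf)
    also have "(\<Sum>r<d. (\<Sum>j<k. \<alpha> j * u j r) * u i r) = (\<Sum>r<d. \<Sum>j<k. \<alpha> j * (u j r * u i r))"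
      by (simp add: sum_distrib_right mult.assoc)
    also have "\<dots> = (\<Sum>j<k. \<Sum>r<d. \<alpha> j * (u j r * u i r))" by (rule sum.swap)
    also have "\<dots> = (\<Sum>j<k. \<alpha> j * (\<Sum>r<d. u j r * u i r))"
      by (simp add: sum_distrib_left)
    also have "\<dots> = (\<Sum>j<k. \<alpha> j * (if j = i then 1 else 0))"
      using on' i by (intro sum.cong) auto
    also have "\<dots> = \<alpha> i" using i by (simp add: if_distrib cong: if_cong)
    finally show ?thesis unfolding \<alpha>_def by simp
  qed
  have ck: "c k = 1"
  proof -
    have "T$$(k,j) = 0" if "j < k" for j using uT T k that by (auto simp: upper_triangular_def)
    thus ?thesis unfolding c_def by simp
  qed
  have cBv: "c i = (\<Sum>r<d. B$$(i,r) * v r)" if i: "i < d" for i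
  proof -
    have "(\<Sum>r<d. B$$(i,r) * v r) = (\<Sum>r<d. \<Sum>l<d. B$$(i,r) * A$$(r,l) * c l)"
      unfolding v_def by (simp add: sum_distrib_left algebra_simps)
    also have "\<dots> = (\<Sum>l<d. \<Sum>r<d. B$$(i,r) * A$$(r,l) * c l)" by (rule sum.swap)
    also have "\<dots> = (\<Sum>l<d. (\<Sum>r<d. B$$(i,r) * A$$(r,l)) * c l)"
      by (simp add: sum_distrib_right)
    also have "\<dots> = (\<Sum>l<d. (if i = l then 1 else 0) * c l)"
    proof (rule sum.cong)
      fix l assume l: "l \<in> {..<d}"
      have "(\<Sum>r<d. B$$(i,r) * A$$(r,l)) = (B*A)$$(i,l)"
        using B A i l by (intro mult_entry[symmetric]) auto
      thus "(\<Sum>r<d. B$$(i,r) * A$$(r,l)) * c l = (if i = l then 1 else 0) * c l"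
        using BA i l by simp
    qed simp
    also have "\<dots> = (\<Sum>l<d. if l = i then c l else 0)" by (intro sum.cong) auto
    also have "\<dots> = c i" using i by simp
    finally show ?thesis by simp
  qed
  have vnz: "\<exists>r<d. v r \<noteq> 0"
  proof (rule ccontr)
    assume "\<not> ?thesis"
    hence "c k = 0" using cBv[OF k] by auto
    thus False using ck by simp
  qed
  define s where "s = (\<Sum>r<d. v r * v r)"
  have spos: "s > 0"
  proof -
    obtain r where r: "r < d" "v r \<noteq> 0" using vnz by auto
    have "s \<ge> v r * v r" unfolding s_def using r
      by (intro member_le_sum) (auto simp: zero_le_mult_iff)
    moreover have "v r * v r > 0" using r by (auto simp: zero_less_mult_iff linorder_neq_iff)
    ultimately show ?thesis by simp
  qed
  define nv where "nv = sqrt s"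
  have nvpos: "nv > 0" using spos unfolding nv_def by simp
  have nv2: "nv * nv = s" using spos unfolding nv_def by simp
  define T' where "T' = mat d d (\<lambda>(i,j). if j = k then c i / nv else T$$(i,j))"
  have T': "T' \<in> carrier_mat d d" unfolding T'_def by simp
  have uT': "upper_triangular T'"
    unfolding upper_triangular_def
  proof (intro allI impI)
    fix i j assume i: "i < dim_row T'" and ji: "j < i"
    have id: "i < d" using i unfolding T'_def by simp
    show "T'$$(i,j) = 0"
    proof (cases "j = k")
      case True
      have "T$$(i,j') = 0" if "j' < k" for j' using uT T id that ji True
        by (auto simp: upper_triangular_def)
      hence "c i = 0" unfolding c_def using ji True by simp
      thus ?thesis using True id ji unfolding T'_def by simp
    next
      case False
      thus ?thesis using uT T id ji unfolding T'_def by (auto simp: upper_triangular_def)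
    qed
  qed
  have AT': "(A*T')$$(r,j) = (if j = k then v r / nv else u j r)" if "r < d" "j < d" for r j
  proof -
    have "(A*T')$$(r,j) = (\<Sum>l<d. A$$(r,l) * T'$$(l,j))"
      using that A T' by (intro mult_entry[of A d d T' d]) auto
    also have "\<dots> = (\<Sum>l<d. A$$(r,l) * (if j = k then c l / nv else T$$(l,j)))"
      using that unfolding T'_def by (intro sum.cong) auto
    also have "\<dots> = (if j = k then v r / nv else u j r)"
      using that uexp unfolding v_def by (auto simp: sum_divide_distrib)
    finally show ?thesis .
  qed
  have "ON d (Suc k) (A*T')"
    unfolding ON_def
  proof (intro allI impI)
    fix i j assume i: "i < Suc k" and j: "j < Suc k"
    have id: "i < d" and jd: "j < d" using i j k by auto
    have eq: "(\<Sum>r<d. (A*T')$$(r,i)*(A*T')$$(r,j)) =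
      (\<Sum>r<d. (if i = k then v r / nv else u i r) * (if j = k then v r / nv else u j r))"
      using AT' id jd by (intro sum.cong) auto
    show "(\<Sum>r<d. (A*T')$$(r,i)*(A*T')$$(r,j)) = (if i=j then 1 else 0)"
      unfolding eq
    proof (cases "i = k")
      case ik: True
      show "(\<Sum>r<d. (if i = k then v r / nv else u i r) * (if j = k then v r / nv else u j r)) = (if i = j then 1 else 0)"
      proof (cases "j = k")
        case True
        have "(\<Sum>r<d. v r / nv * (v r / nv)) = s / (nv*nv)"
          unfolding s_def by (simp add: sum_divide_distrib)
        thus ?thesis using ik True nv2 spos by simp
      next
        case False
        hence "j < k" using j by auto
        have "(\<Sum>r<d. v r / nv * u j r) = (\<Sum>r<d. v r * u j r) / nv"
          by (simp add: sum_divide_distrib)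
        thus ?thesis using ik False v2[OF \<open>j<k\<close>] by simp
      qed
    next
      case ik: False
      hence ik': "i < k" using i by auto
      show "(\<Sum>r<d. (if i = k then v r / nv else u i r) * (if j = k then v r / nv else u j r)) = (if i = j then 1 else 0)"
      proof (cases "j = k")
        case True
        have "(\<Sum>r<d. u i r * (v r / nv)) = (\<Sum>r<d. v r * u i r) / nv"
          by (simp add: sum_divide_distrib mult.commute)
        thus ?thesis using ik True v2[OF ik'] by simp
      next
        case False
        hence "j < k" using j by auto
        thus ?thesis using ik False on'[OF ik'] by simp
      qed
    qed
  qed
  thus ?thesis using T' uT' by blast
qed

lemma gs_exists:
  fixes A B :: "real mat"
  assumes A: "A \<in> carrier_mat d d" and B: "B \<in> carrier_mat d d" and BA: "B * A = 1\<^sub>m d"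
  shows "\<exists>T. T \<in> carrier_mat d d \<and> upper_triangular T \<and> transpose_mat (A*T) * (A*T) = 1\<^sub>m d"
proof -
  have "k \<le> d \<Longrightarrow> \<exists>T. T \<in> carrier_mat d d \<and> upper_triangular T \<and> ON d k (A*T)" for k
  proof (induct k)
    case 0
    have "upper_triangular (1\<^sub>m d :: real mat)" by (auto simp: upper_triangular_def)
    thus ?case unfolding ON_def by (intro exI[of _ "1\<^sub>m d"]) auto
  next
    case (Suc k)
    then obtain T where "T \<in> carrier_mat d d" "upper_triangular T" "ON d k (A*T)" by auto
    thus ?case using gs_step[OF A B BA] Suc by auto
  qed
  then obtain T where T: "T \<in> carrier_mat d d" "upper_triangular T" "ON d d (A*T)" by auto
  have "transpose_mat (A*T) * (A*T) = 1\<^sub>m d"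
  proof (rule eq_matI)
    fix i j assume "i < dim_row (1\<^sub>m d :: real mat)" "j < dim_col (1\<^sub>m d :: real mat)"
    hence ij: "i < d" "j < d" by auto
    have "(transpose_mat (A*T) * (A*T))$$(i,j) = (\<Sum>r<d. (transpose_mat (A*T))$$(i,r) * (A*T)$$(r,j))"
      using A T ij by (intro mult_entry[of _ d d _ d]) auto
    also have "\<dots> = (\<Sum>r<d. (A*T)$$(r,i) * (A*T)$$(r,j))"
      using A T ij by (intro sum.cong) auto
    also have "\<dots> = (1\<^sub>m d :: real mat) $$ (i,j)" using T(3) ij unfolding ON_def by auto
    finally show "(transpose_mat (A*T) * (A*T))$$(i,j) = (1\<^sub>m d :: real mat) $$ (i,j)" .
  qed (use A T in auto)
  thus ?thesis using T by blast
qed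




definition Pm :: "nat \<Rightarrow> (nat \<Rightarrow> nat) \<Rightarrow> real mat" where
  "Pm d f = mat d d (\<lambda>(k,i). if f k = i then 1 else 0)"

lemma Pm_carrier[simp]: "Pm d f \<in> carrier_mat d d" unfolding Pm_def by simp

lemma Pm_mult:
  assumes f: "f permutes {..<d}" and X: "X \<in> carrier_mat d m" and k: "k < d" and j: "j < m"
  shows "(Pm d f * X)$$(k,j) = X$$(f k, j)"
proof -
  have fk: "f k < d" using permutes_in_image[OF f] k by auto
  have "(Pm d f * X)$$(k,j) = (\<Sum>i<d. Pm d f $$ (k,i) * X$$(i,j))"
    using X k j by (intro mult_entry[of _ d d X m]) auto
  also have "\<dots> = (\<Sum>i<d. if i = f k then X$$(i,j) else 0)"
    using k unfolding Pm_def by (intro sum.cong) auto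
  also have "\<dots> = X$$(f k, j)" using fk by simp
  finally show ?thesis .
qed

lemma Pm_Pmt:
  assumes f: "f permutes {..<d}"
  shows "Pm d f * transpose_mat (Pm d f) = 1\<^sub>m d"
proof (rule eq_matI)
  fix k l assume "k < dim_row (1\<^sub>m d :: real mat)" "l < dim_col (1\<^sub>m d :: real mat)"
  hence kl: "k < d" "l < d" by auto
  have "(Pm d f * transpose_mat (Pm d f))$$(k,l) = (transpose_mat (Pm d f))$$(f k, l)"
    using kl by (intro Pm_mult[OF f]) auto
  also have "\<dots> = (if f l = f k then 1 else 0)"
    using kl permutes_in_image[OF f] unfolding Pm_def by auto
  also have "\<dots> = (1\<^sub>m d :: real mat)$$(k,l)"
    using kl permutes_inj[OF f] by (auto simp: inj_eq)
  finally show "(Pm d f * transpose_mat (Pm d f))$$(k,l) = (1\<^sub>m d :: real mat)$$(k,l)" .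
qed (auto simp: Pm_def)

lemma Pmt_Pm:
  assumes f: "f permutes {..<d}"
  shows "transpose_mat (Pm d f) * Pm d f = 1\<^sub>m d"
  using mat_mult_left_right_inverse[OF Pm_carrier _ Pm_Pmt[OF f]] by simp

lemma orth_right:
  assumes "orth_mat d U" shows "U * transpose_mat U = 1\<^sub>m d"
  using assms mat_mult_left_right_inverse[of "transpose_mat U" d U] unfolding orth_mat_def
  by auto

lemma mult_diag_right:
  assumes X: "X \<in> carrier_mat n d" and k: "k < n" and j: "j < d"
  shows "(X * diag_of d s)$$(k,j) = X$$(k,j) * s j"
proof -
  have "(X * diag_of d s)$$(k,j) = (\<Sum>i<d. X$$(k,i) * diag_of d s $$ (i,j))"
    using X k j by (intro mult_entry[of _ n d _ d]) (auto simp: diag_of_def)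
  also have "\<dots> = (\<Sum>i<d. if i = j then X$$(k,j) * s j else 0)"
    using j unfolding diag_of_def by (intro sum.cong) auto
  finally show ?thesis using j by simp
qed

lemma mult_diag_left:
  assumes X: "X \<in> carrier_mat d n" and k: "k < d" and j: "j < n"
  shows "(diag_of d s * X)$$(k,j) = s k * X$$(k,j)"
proof -
  have "(diag_of d s * X)$$(k,j) = (\<Sum>i<d. diag_of d s $$ (k,i) * X$$(i,j))"
    using X k j by (intro mult_entry[of _ d d _ n]) (auto simp: diag_of_def)
  also have "\<dots> = (\<Sum>i<d. if i = k then s k * X$$(k,j) else 0)"
    using k unfolding diag_of_def by (intro sum.cong) auto
  finally show ?thesis using k by simp
qed

lemma diag_of_carrier[simp]: "diag_of d s \<in> carrier_mat d d" unfolding diag_of_def by simp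

lemma low_zero_iff:
  assumes "S \<in> carrier_mat d d"
  shows "low S = 0\<^sub>m d d \<longleftrightarrow> upper_triangular S"
proof
  assume h: "low S = 0\<^sub>m d d"
  show "upper_triangular S" unfolding upper_triangular_def
  proof (intro allI impI)
    fix i j assume "i < dim_row S" "j < i"
    moreover have "low S $$ (i,j) = 0" using h calculation assms by simp
    ultimately show "S$$(i,j) = 0" using assms unfolding low_def by auto
  qed
next
  assume "upper_triangular S"
  thus "low S = 0\<^sub>m d d" using assms unfolding low_def upper_triangular_def
    by (intro eq_matI) auto
qed




lemma cancel_assoc:
  fixes A B X :: "real mat"
  assumes "A \<in> carrier_mat n m" "B \<in> carrier_mat m n" "A * B = 1\<^sub>m n" "X \<in> carrier_mat n p"
  shows "A * (B * X) = X"
proof -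
  have "(A * B) * X = A * (B * X)" by (rule assoc_mult_mat) (use assms in auto)
  thus ?thesis using assms by simp
qed

lemma mult_sq: "A \<in> carrier_mat d d \<Longrightarrow> B \<in> carrier_mat d d \<Longrightarrow> A * B \<in> carrier_mat d d"
  by auto

lemma tr_sq: "A \<in> carrier_mat d d \<Longrightarrow> transpose_mat A \<in> carrier_mat d d"
  by auto

locale jt =
  fixes d N :: nat and V Vinv :: "real mat" and \<Lambda> :: "nat \<Rightarrow> nat \<Rightarrow> real"
    and M :: "nat \<Rightarrow> real mat"
  assumes V: "V \<in> carrier_mat d d" and Vi: "Vinv \<in> carrier_mat d d"
    and VVi: "V * Vinv = 1\<^sub>m d" and ViV: "Vinv * V = 1\<^sub>m d"
    and Mdef: "\<And>n. n < N \<Longrightarrow> M n = V * diag_of d (\<Lambda> n) * Vinv"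
    and sep: "\<And>i i'. i < d \<Longrightarrow> i' < d \<Longrightarrow> i \<noteq> i' \<Longrightarrow> \<exists>n<N. \<Lambda> n i \<noteq> \<Lambda> n i'"
begin

lemmas asm = assoc_mult_mat[of _ d d _ d _ d] mult_sq[of _ d] tr_sq[of _ d]

definition good :: "(nat \<Rightarrow> nat) \<Rightarrow> real mat \<Rightarrow> bool" where
  "good f U \<longleftrightarrow> (\<forall>k<d. \<forall>j<f k. (Vinv*U)$$(k,j) = 0)"

definition Tm :: "(nat \<Rightarrow> nat) \<Rightarrow> real mat \<Rightarrow> real mat" where
  "Tm f U = transpose_mat (Pm d f) * (Vinv * U)"

lemma M_carrier: "n < N \<Longrightarrow> M n \<in> carrier_mat d d"
  using Mdef V Vi by (simp add: asm)

lemma ViM: assumes n: "n < N" shows "Vinv * M n = diag_of d (\<Lambda> n) * Vinv"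
proof -
  have "Vinv * M n = Vinv * (V * (diag_of d (\<Lambda> n) * Vinv))"
    using Mdef[OF n] V Vi by (simp add: asm)
  also have "\<dots> = diag_of d (\<Lambda> n) * Vinv"
    by (rule cancel_assoc[where p=d, OF Vi V ViV]) (use Vi in \<open>simp add: asm\<close>)
  finally show ?thesis .
qed

lemma orthD: assumes "orth_mat d U"
  shows "U \<in> carrier_mat d d" "transpose_mat U * U = 1\<^sub>m d" "U * transpose_mat U = 1\<^sub>m d"
  using assms orth_right unfolding orth_mat_def by auto

lemma WS:
  assumes U: "orth_mat d U" and n: "n < N"
  shows "(Vinv*U) * (transpose_mat U * M n * U) = diag_of d (\<Lambda> n) * (Vinv*U)"
proof -
  note UU = orthD[OF U]
  note Mc = M_carrier[OF n]
  have "(Vinv*U) * (transpose_mat U * M n * U) = Vinv * (U * (transpose_mat U * (M n * U)))"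
    using UU Mc Vi by (simp add: asm)
  also have "U * (transpose_mat U * (M n * U)) = M n * U"
    by (rule cancel_assoc[OF UU(1) _ UU(3)]) (use UU Mc in auto)
  also have "Vinv * (M n * U) = (Vinv * M n) * U" using Vi Mc UU by (simp add: asm)
  also have "\<dots> = diag_of d (\<Lambda> n) * (Vinv*U)" unfolding ViM[OF n] using Vi UU by (simp add: asm)
  finally show ?thesis .
qed

lemma Winv:
  assumes U: "orth_mat d U"
  shows "(Vinv*U) * (transpose_mat U * V) = 1\<^sub>m d"
proof -
  note UU = orthD[OF U]
  have "(Vinv*U) * (transpose_mat U * V) = Vinv * (U * (transpose_mat U * V))"
    using UU V Vi by (simp add: asm)
  also have "U * (transpose_mat U * V) = V"
    by (rule cancel_assoc[OF UU(1) _ UU(3)]) (use UU V in auto)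
  finally show ?thesis using ViV by simp
qed

lemma Tm_carrier: "orth_mat d U \<Longrightarrow> Tm f U \<in> carrier_mat d d"
  unfolding Tm_def using orthD Vi Pm_carrier[of d f] by (simp add: asm)

lemma PTm:
  assumes U: "orth_mat d U" and f: "f permutes {..<d}"
  shows "Pm d f * Tm f U = Vinv * U"
  unfolding Tm_def
  by (rule cancel_assoc[OF Pm_carrier _ Pm_Pmt[OF f]]) (use orthD[OF U] Vi in auto)

lemma Tm_entry:
  assumes U: "orth_mat d U" and f: "f permutes {..<d}" and k: "k < d" and j: "j < d"
  shows "Tm f U $$ (f k, j) = (Vinv*U)$$(k,j)"
  using Pm_mult[OF f Tm_carrier[where f=f, OF U] k j] PTm[OF U f] by simp

lemma Tm_ut:
  assumes U: "orth_mat d U" and f: "f permutes {..<d}" and g: "good f U"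
  shows "upper_triangular (Tm f U)"
  unfolding upper_triangular_def
proof (intro allI impI)
  fix i j assume i: "i < dim_row (Tm f U)" and ji: "j < i"
  have id: "i < d" using i Tm_carrier[where f=f, OF U] by auto
  define k where "k = inv_into UNIV f i"
  have k: "k < d" unfolding k_def using permutes_in_image[OF permutes_inv[OF f]] id by auto
  have fk: "f k = i" unfolding k_def using permutes_inverses[OF f] by simp
  have "Tm f U $$ (i,j) = (Vinv*U)$$(k,j)" using Tm_entry[OF U f k] fk ji id by auto
  also have "\<dots> = 0" using g k fk ji unfolding good_def by auto
  finally show "Tm f U $$ (i,j) = 0" .
qed

lemma Tm_inv:
  assumes U: "orth_mat d U" and f: "f permutes {..<d}"
  shows "Tm f U * (transpose_mat U * V * Pm d f) = 1\<^sub>m d"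
proof -
  note UU = orthD[OF U]
  have "Tm f U * (transpose_mat U * V * Pm d f) =
     transpose_mat (Pm d f) * (((Vinv * U) * (transpose_mat U * V)) * Pm d f)"
    unfolding Tm_def using UU V Vi by (simp add: asm)
  also have "\<dots> = 1\<^sub>m d" unfolding Winv[OF U] using Pmt_Pm[OF f] left_mult_one_mat[OF Pm_carrier[of d f]] by simp
  finally show ?thesis .
qed

lemma Tm_diag:
  assumes U: "orth_mat d U" and f: "f permutes {..<d}" and g: "good f U" and i: "i < d"
  shows "Tm f U $$ (i,i) \<noteq> 0"
proof -
  have "det (Tm f U) \<noteq> 0"
    by (rule det_ne0_of_inv[OF Tm_carrier[where f=f, OF U] _ Tm_inv[OF U f]]) (use orthD[OF U] V in \<open>simp add: asm\<close>)
  thus ?thesis using ut_diag_ne0[OF Tm_carrier[where f=f, OF U] Tm_ut[OF U f g] _ i] by simp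
qed

lemma good_pivot:
  assumes U: "orth_mat d U" and f: "f permutes {..<d}" and g: "good f U" and k: "k < d"
  shows "(Vinv*U)$$(k, f k) \<noteq> 0"
proof -
  have fk: "f k < d" using permutes_in_image[OF f] k by auto
  show ?thesis using Tm_entry[OF U f k fk] Tm_diag[OF U f g fk] by simp
qed

lemma good_unique:
  assumes U: "orth_mat d U" and f: "f permutes {..<d}" and gf: "good f U"
    and g: "g permutes {..<d}" and gg: "good g U"
  shows "f = g"
proof
  fix k show "f k = g k"
  proof (cases "k < d")
    case True
    have 1: "(Vinv*U)$$(k, f k) \<noteq> 0" by (rule good_pivot[OF U f gf True])
    have 2: "(Vinv*U)$$(k, g k) \<noteq> 0" by (rule good_pivot[OF U g gg True])
    have "\<not> f k < g k" using 1 gg True unfolding good_def by auto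
    moreover have "\<not> g k < f k" using 2 gf True unfolding good_def by auto
    ultimately show ?thesis by simp
  next
    case False
    thus ?thesis using permutes_not_in[OF f] permutes_not_in[OF g] by auto
  qed
qed

lemma backw:
  assumes U: "orth_mat d U" and f: "f permutes {..<d}" and g: "good f U"
  shows "exact_joint_triangularizer d N M U"
  unfolding exact_joint_triangularizer_def
proof (intro conjI allI impI)
  show "orth_mat d U" by fact
  fix n assume n: "n < N"
  note UU = orthD[OF U]
  note Mc = M_carrier[OF n]
  define S where "S = transpose_mat U * M n * U"
  have S: "S \<in> carrier_mat d d" unfolding S_def using UU Mc by (simp add: asm)
  define T where "T = Tm f U"
  have T: "T \<in> carrier_mat d d" unfolding T_def by (rule Tm_carrier[where f=f, OF U])
  define D where "D = diag_of d (\<Lambda> n)"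
  define D' where "D' = diag_of d (\<lambda>i. \<Lambda> n (inv_into UNIV f i))"
  have D'c: "D' \<in> carrier_mat d d" unfolding D'_def by simp
  have DP: "D * Pm d f = Pm d f * D'"
  proof (rule eq_matI)
    fix k i assume "k < dim_row (Pm d f * D')" "i < dim_col (Pm d f * D')"
    hence ki: "k < d" "i < d" unfolding D'_def by (auto simp: Pm_def diag_of_def)
    have "(D * Pm d f)$$(k,i) = \<Lambda> n k * Pm d f $$ (k,i)"
      unfolding D_def by (rule mult_diag_left[OF Pm_carrier ki])
    also have "\<dots> = Pm d f $$ (k,i) * \<Lambda> n (inv_into UNIV f i)"
      using ki permutes_inverses[OF f] unfolding Pm_def by auto
    also have "\<dots> = (Pm d f * D')$$(k,i)"
      unfolding D'_def by (rule mult_diag_right[symmetric, OF Pm_carrier ki])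
    finally show "(D * Pm d f)$$(k,i) = (Pm d f * D')$$(k,i)" .
  qed (auto simp: D_def D'_def Pm_def diag_of_def)
  have PTS: "Pm d f * (T * S) = Pm d f * (D' * T)"
  proof -
    have "Pm d f * (T * S) = (Pm d f * T) * S" using T S by (simp add: asm)
    also have "\<dots> = D * (Pm d f * T)"
      unfolding T_def PTm[OF U f] D_def S_def by (rule WS[OF U n])
    also have "\<dots> = (D * Pm d f) * T" using T by (simp add: D_def asm)
    also have "\<dots> = Pm d f * (D' * T)" unfolding DP using T by (simp add: D'_def asm)
    finally show ?thesis .
  qed
  have TS: "T * S = D' * T"
  proof -
    have "T * S = transpose_mat (Pm d f) * (Pm d f * (T * S))"
      by (rule cancel_assoc[where p=d, symmetric, OF _ Pm_carrier Pmt_Pm[OF f]]) (use T S in auto)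
    also have "\<dots> = transpose_mat (Pm d f) * (Pm d f * (D' * T))" unfolding PTS ..
    also have "\<dots> = D' * T"
      by (rule cancel_assoc[where p=d, OF _ Pm_carrier Pmt_Pm[OF f]]) (use T D'c mult_carrier_mat[OF D'c T] in auto)
    finally show ?thesis .
  qed
  have uC: "upper_triangular (D' * T)"
    unfolding upper_triangular_def
  proof (intro allI impI)
    fix i j assume i: "i < dim_row (D' * T)" and ji: "j < i"
    have id: "i < d" using i by (simp add: D'_def diag_of_def)
    have "T$$(i,j) = 0" using Tm_ut[OF U f g] id ji T unfolding T_def upper_triangular_def by auto
    thus "(D' * T)$$(i,j) = 0" unfolding D'_def using mult_diag_left[OF T id] ji id by simp
  qed
  have "upper_triangular S"
    by (rule ut_solve[OF T S _ _ uC TS]) (use Tm_ut[OF U f g] Tm_diag[OF U f g] in \<open>auto simp: T_def\<close>)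
  thus "low (transpose_mat U * M n * U) = 0\<^sub>m d d" using low_zero_iff[OF S] unfolding S_def by simp
qed

end



context jt begin

lemma fwd:
  assumes E: "exact_joint_triangularizer d N M U"
  shows "\<exists>f. f permutes {..<d} \<and> good f U"
proof -
  have U: "orth_mat d U" and lowz: "\<And>n. n < N \<Longrightarrow> low (transpose_mat U * M n * U) = 0\<^sub>m d d"
    using E unfolding exact_joint_triangularizer_def by auto
  note UU = orthD[OF U]
  define W where "W = Vinv * U"
  have Wc: "W \<in> carrier_mat d d" unfolding W_def using Vi UU by (simp add: asm)
  define S where "S n = transpose_mat U * M n * U" for n
  have Sc: "S n \<in> carrier_mat d d" if "n < N" for n
    unfolding S_def using UU M_carrier[OF that] by (simp add: asm)
  have upS: "upper_triangular (S n)" if "n < N" for n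
    using low_zero_iff[OF Sc[OF that]] lowz[OF that] unfolding S_def by simp
  have rownz: "\<exists>j<d. W$$(k,j) \<noteq> 0" if k: "k < d" for k
  proof (rule ccontr)
    assume "\<not> ?thesis"
    hence z: "\<And>j. j < d \<Longrightarrow> W$$(k,j) = 0" by auto
    define Y where "Y = transpose_mat U * V"
    have Yc: "Y \<in> carrier_mat d d" unfolding Y_def using UU V by (simp add: asm)
    have "(W * Y)$$(k,k) = (\<Sum>j<d. W$$(k,j) * Y$$(j,k))"
      by (rule mult_entry[OF Wc Yc k k])
    also have "\<dots> = 0" using z by simp
    finally have "(W * Y)$$(k,k) = 0" .
    moreover have "W * Y = 1\<^sub>m d" unfolding W_def Y_def by (rule Winv[OF U])
    ultimately show False using k by simp
  qed
  define fl where "fl k = (LEAST j. W$$(k,j) \<noteq> 0)" for k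
  have flp: "fl k < d \<and> W$$(k, fl k) \<noteq> 0 \<and> (\<forall>j < fl k. W$$(k,j) = 0)" if k: "k < d" for k
  proof -
    obtain j0 where j0: "j0 < d" "W$$(k,j0) \<noteq> 0" using rownz[OF k] by auto
    have 1: "W$$(k, fl k) \<noteq> 0" unfolding fl_def by (rule LeastI[of _ j0]) (use j0 in auto)
    have 2: "fl k \<le> j0" unfolding fl_def by (rule Least_le) (use j0 in auto)
    have 3: "\<forall>j < fl k. W$$(k,j) = 0" unfolding fl_def using not_less_Least by blast
    show ?thesis using 1 2 3 j0 by auto
  qed
  have eig: "\<Lambda> n k = S n $$ (fl k, fl k)" if k: "k < d" and n: "n < N" for k n
  proof -
    define j where "j = fl k"
    have j: "j < d" "W$$(k,j) \<noteq> 0" "\<And>l. l < j \<Longrightarrow> W$$(k,l) = 0"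
      using flp[OF k] unfolding j_def by auto
    have "(W * S n)$$(k,j) = (diag_of d (\<Lambda> n) * W)$$(k,j)"
      using WS[OF U n] unfolding W_def S_def by simp
    also have "\<dots> = \<Lambda> n k * W$$(k,j)" by (rule mult_diag_left[OF Wc k j(1)])
    finally have eq: "(W * S n)$$(k,j) = \<Lambda> n k * W$$(k,j)" .
    have "(W * S n)$$(k,j) = (\<Sum>l<d. W$$(k,l) * S n $$ (l,j))"
      by (rule mult_entry[OF Wc Sc[OF n] k j(1)])
    also have "\<dots> = (\<Sum>l<d. if l = j then W$$(k,j) * S n $$ (j,j) else 0)"
    proof (rule sum.cong)
      fix l assume l: "l \<in> {..<d}"
      show "W$$(k,l) * S n $$ (l,j) = (if l = j then W$$(k,j) * S n $$ (j,j) else 0)"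
      proof (cases "l < j")
        case True thus ?thesis using j(3) by auto
      next
        case False
        show ?thesis
        proof (cases "l = j")
          case False
          hence "j < l" using \<open>\<not> l < j\<close> by auto
          hence "S n $$ (l,j) = 0" using upS[OF n] Sc[OF n] l unfolding upper_triangular_def by auto
          thus ?thesis using False by simp
        qed simp
      qed
    qed simp
    also have "\<dots> = W$$(k,j) * S n $$ (j,j)" using j(1) by simp
    finally show ?thesis using eq j(2) unfolding j_def by simp
  qed
  have flinj: "a = b" if ab: "a < d" "b < d" "fl a = fl b" for a b
  proof (rule ccontr)
    assume "a \<noteq> b"
    then obtain n where n: "n < N" "\<Lambda> n a \<noteq> \<Lambda> n b" using sep[OF ab(1) ab(2)] by blast
    thus False using eig[OF ab(1) n(1)] eig[OF ab(2) n(1)] ab(3) by simp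
  qed
  define f where "f k = (if k < d then fl k else k)" for k
  have inj: "inj_on f {..<d}" unfolding inj_on_def f_def using flinj by auto
  have sub: "f ` {..<d} \<subseteq> {..<d}" unfolding f_def using flp by auto
  have "f ` {..<d} = {..<d}" by (rule endo_inj_surj[OF _ sub inj]) simp
  hence "bij_betw f {..<d} {..<d}" using inj unfolding bij_betw_def by simp
  hence fp: "f permutes {..<d}" by (rule bij_imp_permutes) (auto simp: f_def)
  have "good f U" unfolding good_def
  proof (intro allI impI)
    fix k j assume "k < d" "j < f k"
    thus "(Vinv*U)$$(k,j) = 0" using flp unfolding f_def W_def by auto
  qed
  thus ?thesis using fp by blast
qed

end



context jt begin

definition Signs :: "(nat \<Rightarrow> real) set" where
  "Signs = PiE {..<d} (\<lambda>_. {-1,1})"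

lemma card_Signs: "card Signs = 2 ^ d"
  unfolding Signs_def by (simp add: card_PiE numeral_2_eq_2)

lemma diag_t: "transpose_mat (diag_of d s) = diag_of d s"
  unfolding diag_of_def by (intro eq_matI) auto

lemma sign_orth:
  assumes Q: "orth_mat d Q" and s: "s \<in> Signs"
  shows "orth_mat d (Q * diag_of d s)"
proof -
  note QQ = orthD[OF Q]
  have c: "Q * diag_of d s \<in> carrier_mat d d" by (rule mult_carrier_mat[OF QQ(1) diag_of_carrier])
  have tr: "transpose_mat (Q * diag_of d s) = diag_of d s * transpose_mat Q"
    using transpose_mult[OF QQ(1) diag_of_carrier[of d s]] diag_t by simp
  have 1: "transpose_mat (Q * diag_of d s) * (Q * diag_of d s) = diag_of d s * (transpose_mat Q * (Q * diag_of d s))"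
    unfolding tr by (rule assoc_mult_mat[of _ d d _ d _ d]) (use QQ in \<open>auto simp: asm\<close>)
  have 2: "transpose_mat Q * (Q * diag_of d s) = diag_of d s"
    by (rule cancel_assoc[where p=d, OF _ QQ(1) QQ(2)]) (use QQ in auto)
  have 3: "diag_of d s * diag_of d s = 1\<^sub>m d"
  proof (rule eq_matI)
    fix i j assume "i < dim_row (1\<^sub>m d :: real mat)" "j < dim_col (1\<^sub>m d :: real mat)"
    hence ij: "i < d" "j < d" by auto
    have "s i \<in> {-1,1}" using s ij unfolding Signs_def PiE_def Pi_def by blast
    hence si: "s i * s i = 1" by (elim insertE) auto
    have "(diag_of d s * diag_of d s)$$(i,j) = s i * (diag_of d s)$$(i,j)"
      by (rule mult_diag_left[OF diag_of_carrier ij])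
    also have "\<dots> = (if i = j then s i * s i else 0)" using ij unfolding diag_of_def by simp
    also have "\<dots> = (1\<^sub>m d :: real mat)$$(i,j)" using si ij by auto
    finally show "(diag_of d s * diag_of d s)$$(i,j) = (1\<^sub>m d :: real mat)$$(i,j)" .
  next
    show "dim_row (diag_of d s * diag_of d s) = dim_row (1\<^sub>m d :: real mat)" by (simp add: diag_of_def)
    show "dim_col (diag_of d s * diag_of d s) = dim_col (1\<^sub>m d :: real mat)" by (simp add: diag_of_def)
  qed
  show ?thesis using c 1 2 3 unfolding orth_mat_def by simp
qed

lemma sign_good:
  assumes Q: "orth_mat d Q" and f: "f permutes {..<d}" and g: "good f Q"
  shows "good f (Q * diag_of d s)"
  unfolding good_def
proof (intro allI impI)
  note QQ = orthD[OF Q]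
  fix k j assume k: "k < d" and j: "j < f k"
  have "f k \<in> {..<d}" using permutes_in_image[OF f] k by simp
  hence jd: "j < d" using j by simp
  have VQ: "Vinv * Q \<in> carrier_mat d d" by (rule mult_carrier_mat[OF Vi QQ(1)])
  have "Vinv * (Q * diag_of d s) = (Vinv * Q) * diag_of d s"
    by (rule assoc_mult_mat[symmetric, of _ d d _ d _ d]) (use QQ Vi in auto)
  hence "(Vinv * (Q * diag_of d s))$$(k,j) = (Vinv * Q)$$(k,j) * s j"
    using mult_diag_right[OF VQ k jd] by simp
  moreover have "(Vinv * Q)$$(k,j) = 0" using g k j unfolding good_def by blast
  ultimately show "(Vinv * (Q * diag_of d s))$$(k,j) = 0" by simp
qed

lemma sign_unique:
  assumes Q: "orth_mat d Q" and f: "f permutes {..<d}" and gQ: "good f Q"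
    and U: "orth_mat d U" and gU: "good f U"
  shows "\<exists>s\<in>Signs. U = Q * diag_of d s"
proof -
  note QQ = orthD[OF Q] and UU = orthD[OF U]
  define X where "X = transpose_mat Q * U"
  have Xc: "X \<in> carrier_mat d d" unfolding X_def by (rule mult_carrier_mat[OF tr_sq[OF QQ(1)] UU(1)])
  have QX: "Q * X = U" unfolding X_def by (rule cancel_assoc[OF QQ(1) _ QQ(3)]) (use QQ UU in auto)
  have TUX: "Tm f U = Tm f Q * X"
  proof -
    have "Tm f U = transpose_mat (Pm d f) * (Vinv * (Q * X))" unfolding Tm_def QX ..
    also have "\<dots> = Tm f Q * X" unfolding Tm_def using QQ Vi Xc Pm_carrier[of d f] by (simp add: asm)
    finally show ?thesis .
  qed
  have uX: "upper_triangular X"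
    by (rule ut_solve[OF Tm_carrier[OF Q] Xc Tm_ut[OF Q f gQ] Tm_diag[OF Q f gQ] Tm_ut[OF U f gU] TUX[symmetric]])
  have XtX: "transpose_mat X * X = 1\<^sub>m d"
  proof -
    have "transpose_mat X = transpose_mat U * Q" unfolding X_def using QQ UU
      by (simp add: transpose_mult[of _ d d _ d])
    hence "transpose_mat X * X = transpose_mat U * (Q * (transpose_mat Q * U))"
      unfolding X_def using QQ UU by (simp add: asm)
    also have "Q * (transpose_mat Q * U) = U" by (rule cancel_assoc[OF QQ(1) _ QQ(3)]) (use QQ UU in auto)
    finally show ?thesis using UU by simp
  qed
  have XXt: "X * transpose_mat X = 1\<^sub>m d"
    using mat_mult_left_right_inverse[OF _ Xc XtX] Xc by simp
  have detX: "det X \<noteq> 0" by (rule det_ne0_of_inv[OF Xc _ XXt]) (use Xc in auto)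
  have uXt: "upper_triangular (transpose_mat X)"
    by (rule ut_solve[OF Xc _ uX _ _ XXt]) (use Xc ut_diag_ne0[OF Xc uX detX] in \<open>auto simp: upper_triangular_def\<close>)
  have offd: "X$$(i,j) = 0" if "i < d" "j < d" "i \<noteq> j" for i j
  proof (cases "j < i")
    case True thus ?thesis using uX Xc that unfolding upper_triangular_def by auto
  next
    case False
    hence "i < j" using that by auto
    thus ?thesis using uXt Xc that unfolding upper_triangular_def by auto
  qed
  have dg: "X$$(i,i) * X$$(i,i) = 1" if i: "i < d" for i
  proof -
    have "(transpose_mat X * X)$$(i,i) = (\<Sum>k<d. (transpose_mat X)$$(i,k) * X$$(k,i))"
      by (rule mult_entry[of _ d d]) (use Xc i in auto)
    also have "\<dots> = (\<Sum>k<d. if k = i then X$$(i,i) * X$$(i,i) else 0)"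
      using offd i Xc by (intro sum.cong) auto
    also have "\<dots> = X$$(i,i) * X$$(i,i)" using i by simp
    finally show ?thesis using XtX i by simp
  qed
  define s where "s = restrict (\<lambda>i. X$$(i,i)) {..<d}"
  have sS: "s \<in> Signs" unfolding Signs_def s_def using dg square_eq_1_iff by auto
  have "X = diag_of d s"
    by (rule eq_matI) (use Xc offd in \<open>auto simp: diag_of_def s_def\<close>)
  thus ?thesis using QX sS by blast
qed

lemma count_one:
  assumes f: "f permutes {..<d}"
  shows "card {U. orth_mat d U \<and> good f U} = 2 ^ d"
proof -
  define A where "A = V * Pm d f"
  define B where "B = transpose_mat (Pm d f) * Vinv"
  have Ac: "A \<in> carrier_mat d d" unfolding A_def by (rule mult_carrier_mat[OF V Pm_carrier])
  have Bc: "B \<in> carrier_mat d d" unfolding B_def by (rule mult_carrier_mat[OF tr_sq[OF Pm_carrier] Vi])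
  have BA: "B * A = 1\<^sub>m d"
  proof -
    have "B * A = transpose_mat (Pm d f) * (Vinv * (V * Pm d f))"
      unfolding A_def B_def using V Vi Pm_carrier[of d f] by (simp add: asm)
    also have "Vinv * (V * Pm d f) = Pm d f" by (rule cancel_assoc[where p=d, OF Vi V ViV]) simp
    finally show ?thesis using Pmt_Pm[OF f] by simp
  qed
  obtain R where R: "R \<in> carrier_mat d d" "upper_triangular R" "transpose_mat (A*R) * (A*R) = 1\<^sub>m d"
    using gs_exists[OF Ac Bc BA] by blast
  define Q where "Q = A * R"
  have Qc: "Q \<in> carrier_mat d d" unfolding Q_def by (rule mult_carrier_mat[OF Ac R(1)])
  have Q: "orth_mat d Q" unfolding orth_mat_def Q_def using R Qc Q_def by simp
  have VQ: "Vinv * Q = Pm d f * R"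
  proof -
    have "Vinv * Q = Vinv * (V * (Pm d f * R))"
      unfolding Q_def A_def using V R Pm_carrier[of d f] by (simp add: asm)
    also have "\<dots> = Pm d f * R"
      by (rule cancel_assoc[where p=d, OF Vi V ViV]) (use R Pm_carrier[of d f] in \<open>simp add: asm\<close>)
    finally show ?thesis .
  qed
  have gQ: "good f Q" unfolding good_def
  proof (intro allI impI)
    fix k j assume k: "k < d" and j: "j < f k"
    have fk: "f k < d" using permutes_in_image[OF f] k by auto
    have "(Vinv * Q)$$(k,j) = R$$(f k, j)" unfolding VQ using j fk by (intro Pm_mult[OF f R(1) k]) auto
    also have "\<dots> = 0" using R j fk unfolding upper_triangular_def by auto
    finally show "(Vinv * Q)$$(k,j) = 0" .
  qed
  have eq: "{U. orth_mat d U \<and> good f U} = (\<lambda>s. Q * diag_of d s) ` Signs"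
  proof
    show "{U. orth_mat d U \<and> good f U} \<subseteq> (\<lambda>s. Q * diag_of d s) ` Signs"
      using sign_unique[OF Q f gQ] by blast
    show "(\<lambda>s. Q * diag_of d s) ` Signs \<subseteq> {U. orth_mat d U \<and> good f U}"
      using sign_orth[OF Q] sign_good[OF Q f gQ] by blast
  qed
  have inj: "inj_on (\<lambda>s. Q * diag_of d s) Signs"
  proof (rule inj_onI)
    fix s s' assume s: "s \<in> Signs" and s': "s' \<in> Signs" and e: "Q * diag_of d s = Q * diag_of d s'"
    have "diag_of d s = transpose_mat Q * (Q * diag_of d s)"
      by (rule cancel_assoc[where p=d, symmetric, OF _ Qc orthD(2)[OF Q]]) (use Qc in auto)
    also have "\<dots> = diag_of d s'" unfolding e
      by (rule cancel_assoc[where p=d, OF _ Qc orthD(2)[OF Q]]) (use Qc in auto)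
    finally have dd: "diag_of d s = diag_of d s'" .
    show "s = s'"
    proof (rule PiE_ext)
      show "s \<in> PiE {..<d} (\<lambda>_. {-1,1})" using s unfolding Signs_def .
      show "s' \<in> PiE {..<d} (\<lambda>_. {-1,1})" using s' unfolding Signs_def .
      fix i assume "i \<in> {..<d}"
      thus "s i = s' i" using arg_cong[OF dd, of "\<lambda>D. D $$ (i,i)"] unfolding diag_of_def by simp
    qed
  qed
  show ?thesis unfolding eq card_image[OF inj] card_Signs ..
qed

lemma main:
  "card {U. exact_joint_triangularizer d N M U} = 2 ^ d * fact d"
proof -
  define P where "P = {f. f permutes {..<d}}"
  define G where "G f = {U. orth_mat d U \<and> good f U}" for f
  have eq: "{U. exact_joint_triangularizer d N M U} = (\<Union>f\<in>P. G f)"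
  proof
    show "{U. exact_joint_triangularizer d N M U} \<subseteq> (\<Union>f\<in>P. G f)"
      using fwd unfolding P_def G_def exact_joint_triangularizer_def by blast
    show "(\<Union>f\<in>P. G f) \<subseteq> {U. exact_joint_triangularizer d N M U}"
      using backw unfolding P_def G_def by blast
  qed
  have fP: "finite P" unfolding P_def by (rule finite_permutations) simp
  have fG: "\<forall>f\<in>P. finite (G f)"
  proof
    fix f assume "f \<in> P"
    hence "card (G f) = 2 ^ d" using count_one unfolding P_def G_def by simp
    thus "finite (G f)" by (intro card_ge_0_finite) simp
  qed
  have disj: "\<forall>f\<in>P. \<forall>g\<in>P. f \<noteq> g \<longrightarrow> G f \<inter> G g = {}"
    using good_unique unfolding P_def G_def by blast
  have "card (\<Union>f\<in>P. G f) = (\<Sum>f\<in>P. card (G f))" by (rule card_UN_disjoint[OF fP fG disj])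
  also have "\<dots> = (\<Sum>f\<in>P. 2 ^ d)" using count_one unfolding P_def G_def by simp
  also have "\<dots> = card P * 2 ^ d" by simp
  also have "card P = fact d" unfolding P_def by (rule card_permutations) simp_all
  finally show ?thesis unfolding eq by simp
qed

end

theorem lemma1:
  fixes d N :: nat and V Vinv :: "real mat" and \<Lambda> :: "nat \<Rightarrow> nat \<Rightarrow> real"
    and M :: "nat \<Rightarrow> real mat"
  assumes "d \<ge> 1" and "N \<ge> 1"
    and "V \<in> carrier_mat d d" and "Vinv \<in> carrier_mat d d"
    and "V * Vinv = 1\<^sub>m d" and "Vinv * V = 1\<^sub>m d"
    and "\<And>n. n < N \<Longrightarrow> M n = V * diag_of d (\<Lambda> n) * Vinv"
    and "\<And>i i'. i < d \<Longrightarrow> i' < d \<Longrightarrow> i \<noteq> i' \<Longrightarrow> \<exists>n<N. \<Lambda> n i \<noteq> \<Lambda> n i'"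
  shows "card {U. exact_joint_triangularizer d N M U} = 2 ^ d * fact d"
  proof -
  interpret jt d N V Vinv \<Lambda> M
    by (unfold_locales) (use assms in auto)
  show ?thesis by (rule main)
qed

end
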